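(* Let $\Omega$ be a domain, $G\subset\mathbb{C}$ a closed set with empty interior, $\Phi=(\phi_n)_n$ a sequence of continuous mappings from $G$ to $\Omega$, and $\mathcal{M}$ a countable family of compact subsets of $G$. If there exists a $(\Phi,\mathcal{M})$-universal function in $H(\Omega)$, then for any compact set $L\subset\Omega$, any $K\in\mathcal{M}$ and any disjoint $I_1,I_2\in\mathcal{M}$ with $K\cup I_1\cup I_2\in\mathcal{M}$, there exist infinitely many $n\in\mathbb{N}$ such that both $\phi_n(K)\cap L=\emptyset$ and $\phi_n(I_1)\cap\phi_n(I_2)=\emptyset$.
   Context: $H(\Omega)$ is the Fréchet space of holomorphic functions on $\Omega$ with the locally uniform topology; $\mathcal{C}(K)$ is the Banach space of continuous functions on $K$ with the sup norm. $f\in H(\Omega)$ is $(\Phi,\mathcal{M})$-universal if for every $K\in\mathcal{M}$ the set $\{f\circ\phi_n|_K:\,n\in\mathbb{N}\}$ is dense in $\mathcal{C}(K)$. *)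

theory Defs
  imports "HOL-Analysis.Analysis"
begin

definition dense_in_CK :: "complex set \<Rightarrow> (complex \<Rightarrow> complex) set \<Rightarrow> bool" where
  "dense_in_CK K F \<longleftrightarrow>
     (\<forall>g. continuous_on K g \<longrightarrow>
        (\<forall>e>0. \<exists>h\<in>F. continuous_on K h \<and> (\<forall>z\<in>K. cmod (h z - g z) < e)))"

definition universal ::
  "complex set \<Rightarrow> (nat \<Rightarrow> complex \<Rightarrow> complex) \<Rightarrow> complex set set \<Rightarrow> (complex \<Rightarrow> complex) \<Rightarrow> bool" where
  "universal \<Omega> \<phi> \<M> f \<longleftrightarrow> f holomorphic_on \<Omega> \<and>
     (\<forall>K\<in>\<M>. dense_in_CK K {f \<circ> \<phi> n | n. True})"

end

theory Submission
  imports Defs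
begin

theorem mainTheorem13:
  fixes \<Omega> G :: "complex set" and \<phi> :: "nat \<Rightarrow> complex \<Rightarrow> complex"
    and \<M> :: "complex set set"
  assumes "open \<Omega>" "connected \<Omega>" "\<Omega> \<noteq> {}"
    and "closed G" "interior G = {}"
    and "\<And>n. continuous_on G (\<phi> n)" "\<And>n. \<phi> n ` G \<subseteq> \<Omega>"
    and "countable \<M>" "\<And>K. K \<in> \<M> \<Longrightarrow> compact K \<and> K \<subseteq> G"
    and "\<exists>f. universal \<Omega> \<phi> \<M> f"
    and "compact L" "L \<subseteq> \<Omega>"
    and "K \<in> \<M>" "I1 \<in> \<M>" "I2 \<in> \<M>" "I1 \<inter> I2 = {}" "K \<union> I1 \<union> I2 \<in> \<M>"
  shows "infinite {n. \<phi> n ` K \<inter> L = {} \<and> \<phi> n ` I1 \<inter> \<phi> n ` I2 = {}}"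
proof
  define N where "N = {n. \<phi> n ` K \<inter> L = {} \<and> \<phi> n ` I1 \<inter> \<phi> n ` I2 = {}}"
  assume fin: "finite {n. \<phi> n ` K \<inter> L = {} \<and> \<phi> n ` I1 \<inter> \<phi> n ` I2 = {}}"
  hence finN: "finite N" by (simp add: N_def)
  define S where "S = K \<union> I1 \<union> I2"
  show False
  proof (cases "S = {}")
    case True
    hence "N = UNIV" by (auto simp: N_def S_def)
    with finN show False by simp
  next
    case False
    then obtain z0 where z0: "z0 \<in> S" by blast
    obtain f where f: "universal \<Omega> \<phi> \<M> f" using assms(10) by blast
    have hol: "f holomorphic_on \<Omega>" and dens: "dense_in_CK S {f \<circ> \<phi> n | n. True}"
      using f assms(17) unfolding universal_def S_def by auto
    have "continuous_on L f"
      using hol assms(12) holomorphic_on_imp_continuous_on continuous_on_subset by blast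
    hence "compact (f ` L)" using assms(11) compact_continuous_image by blast
    then obtain B where B: "\<And>w. w \<in> L \<Longrightarrow> cmod (f w) \<le> B"
      using compact_imp_bounded bounded_iff by (metis imageI)
    have "bounded ((\<lambda>n. f (\<phi> n z0)) ` N)" using finN by (simp add: finite_imp_bounded)
    then obtain C where C: "\<And>n. n \<in> N \<Longrightarrow> cmod (f (\<phi> n z0)) \<le> C"
      using bounded_iff by (metis imageI)
    define A where "A = \<bar>B\<bar> + \<bar>C\<bar> + 2"
    define \<delta> where "\<delta> = setdist I2 I1"
    define e where "e = (if \<delta> > 0 then min 1 (\<delta>/3) else 1)"
    have e0: "e > 0" by (simp add: e_def)
    have e1: "e \<le> 1" by (simp add: e_def)
    define g where "g = (\<lambda>z. complex_of_real (A + infdist z I1))"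
    have gc: "continuous_on S g" unfolding g_def by (intro continuous_intros)
    obtain h where h: "h \<in> {f \<circ> \<phi> n | n. True}" and hS: "\<forall>z\<in>S. cmod (h z - g z) < e"
      using dens gc e0 unfolding dense_in_CK_def by blast
    then obtain n where hn: "h = f \<circ> \<phi> n" by blast
    have gnorm: "cmod (g z) \<ge> A" for z
    proof -
      have "A + infdist z I1 \<ge> A" "A \<ge> 0" using infdist_nonneg[of z I1] by (auto simp: A_def)
      thus ?thesis unfolding g_def norm_of_real by linarith
    qed
    have big: "cmod (f (\<phi> n z)) > A - 1" if "z \<in> S" for z
    proof -
      have "cmod (f (\<phi> n z) - g z) < e" using hS that hn by auto
      moreover have "cmod (g z) \<le> cmod (f (\<phi> n z)) + cmod (f (\<phi> n z) - g z)"
        using norm_triangle_ineq4[of "f (\<phi> n z)" "f (\<phi> n z) - g z"] by simp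
      ultimately show ?thesis using gnorm[of z] e1 by linarith
    qed
    have "n \<notin> N"
    proof
      assume "n \<in> N"
      hence "cmod (f (\<phi> n z0)) \<le> C" by (rule C)
      with big[OF z0] show False unfolding A_def by linarith
    qed
    moreover have "\<phi> n ` K \<inter> L = {}"
    proof (rule ccontr)
      assume "\<phi> n ` K \<inter> L \<noteq> {}"
      then obtain z where z: "z \<in> K" "\<phi> n z \<in> L" by blast
      have "z \<in> S" using z S_def by auto
      with big B[OF z(2)] show False unfolding A_def by fastforce
    qed
    moreover have "\<phi> n ` I1 \<inter> \<phi> n ` I2 = {}"
    proof (rule ccontr)
      assume "\<phi> n ` I1 \<inter> \<phi> n ` I2 \<noteq> {}"
      then obtain z1 z2 where z: "z1 \<in> I1" "z2 \<in> I2" "\<phi> n z1 = \<phi> n z2" by auto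
      have cI1: "compact I1" "compact I2" using assms(9,14,15) by auto
      have "setdist I2 I1 \<noteq> 0"
        using setdist_eq_0_compact_closed[OF cI1(2) compact_imp_closed[OF cI1(1)]] z assms(16)
        by auto
      hence dpos: "\<delta> > 0" using setdist_pos_le[of I2 I1] unfolding \<delta>_def by linarith
      hence e3: "e \<le> \<delta>/3" by (simp add: e_def)
      have "infdist z2 I1 = setdist {z2} I1" by (rule infdist_eq_setdist)
      also have "\<dots> \<ge> \<delta>" unfolding \<delta>_def using z(2) by (intro setdist_subset_left) auto
      finally have d2: "infdist z2 I1 \<ge> \<delta>" .
      have d1: "infdist z1 I1 = 0" using z(1) by simp
      have a: "cmod (f (\<phi> n z1) - g z1) < e" using hS hn z(1) S_def by auto
      have b: "cmod (f (\<phi> n z2) - g z2) < e" using hS hn z S_def by auto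
      have "cmod (g z2 - g z1) \<le> cmod (f (\<phi> n z1) - g z1) + cmod (f (\<phi> n z2) - g z2)"
        using z(3) norm_triangle_ineq4[of "f (\<phi> n z2) - g z1" "f (\<phi> n z2) - g z2"]
        by (simp add: norm_minus_commute)
      moreover have "cmod (g z2 - g z1) = infdist z2 I1"
        unfolding g_def using d1 infdist_nonneg[of z2 I1]
        by (simp flip: of_real_diff)
      ultimately show False using a b d2 e3 dpos by linarith
    qed
    ultimately show False unfolding N_def by auto
  qed
qed

end
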